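(* Let $(\mathcal F,d)$ be a metric space, $\gamma\in(0,\infty]$, and $\Sigma=(\Sigma_M)_{M\in\mathbb N}$ a sequence of non-empty subsets of $\mathcal F$ which is $\gamma$-encodable. For $\alpha,\beta>0$ let $\mathcal A^\alpha(\mathcal F,\Sigma,\beta)=\{f\in\mathcal F:\sup_{M\ge1}M^\alpha d(f,\Sigma_M)\le\beta\}$, where $d(f,\Sigma_M)=\inf_{g\in\Sigma_M}d(f,g)$, and assume it is non-empty. Then $\gamma^*_e(\mathcal A^\alpha(\mathcal F,\Sigma,\beta))\ge\min(\alpha,\gamma)$.
   Context: A finite $X\subset\mathcal C$ is an $\varepsilon$-covering of $\mathcal C$ if every point of $\mathcal C$ is within distance $\varepsilon$ of some point of $X$; $N(\mathcal C,d,\varepsilon)$ is the minimal size of such a covering ($+\infty$ if none), $H=\log_2N$, and $\gamma^*_e(\mathcal C)=\sup\{\gamma>0:H(\mathcal C,d,\varepsilon)=O(\varepsilon^{-1/\gamma})\text{ as }\varepsilon\to0\}$ ($0$ if empty). For $\gamma,h>0$, a $(\gamma,h)$-encoding of $\Sigma$ is a sequence $(\Sigma(\gamma,h)_M)_M$ such that for some $c_1,c_2>0$ and all $M$, $\Sigma(\gamma,h)_M$ is a $c_1M^{-\gamma}$-covering of $\Sigma_M$ with $\log_2|\Sigma(\gamma,h)_M|\le c_2M^{1+h}$. $\Sigma$ is $\gamma$-encodable if it admits a $(\gamma,h)$-encoding for every $h>0$, and $\infty$-encodable if $\gamma$-encodable for all $\gamma>0$. *)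

theory Defs
  imports "HOL-Analysis.Analysis" "HOL-Library.Extended_Nat" "HOL-Library.Extended_Real"
begin

definition is_covering :: "'a::metric_space set \<Rightarrow> 'a set \<Rightarrow> real \<Rightarrow> bool" where
  "is_covering X C eps \<longleftrightarrow> finite X \<and> X \<subseteq> C \<and> (\<forall>y\<in>C. \<exists>x\<in>X. dist y x \<le> eps)"

text \<open>Covering number N(C,d,eps); infinity if no finite covering exists (Inf {} = infinity).\<close>
definition covering_number :: "'a::metric_space set \<Rightarrow> real \<Rightarrow> enat" where
  "covering_number C eps = Inf {enat (card X) | X. is_covering X C eps}"

definition entropy_bigO :: "'a::metric_space set \<Rightarrow> real \<Rightarrow> bool" where
  "entropy_bigO C g \<longleftrightarrow> (\<exists>c. \<forall>\<^sub>F eps in at_right 0.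
      covering_number C eps \<noteq> \<infinity> \<and>
      \<bar>log 2 (real (the_enat (covering_number C eps)))\<bar> \<le> c * \<bar>eps powr (- 1 / g)\<bar>)"

definition opt_entropy_exp :: "'a::metric_space set \<Rightarrow> ereal" where
  "opt_entropy_exp C =
     (if {g::real. g > 0 \<and> entropy_bigO C g} = {} then 0
      else Sup (ereal ` {g::real. g > 0 \<and> entropy_bigO C g}))"

definition has_encoding :: "(nat \<Rightarrow> 'a::metric_space set) \<Rightarrow> real \<Rightarrow> real \<Rightarrow> bool" where
  "has_encoding \<Sigma> g h \<longleftrightarrow> (\<exists>E :: nat \<Rightarrow> 'a set. \<exists>c1 c2. c1 > 0 \<and> c2 > 0 \<and>
      (\<forall>M\<ge>1. is_covering (E M) (\<Sigma> M) (c1 * real M powr (- g)) \<and>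
               log 2 (real (card (E M))) \<le> c2 * real M powr (1 + h)))"

definition gamma_encodable :: "(nat \<Rightarrow> 'a::metric_space set) \<Rightarrow> real \<Rightarrow> bool" where
  "gamma_encodable \<Sigma> g \<longleftrightarrow> (\<forall>h>0. has_encoding \<Sigma> g h)"

definition encodable :: "(nat \<Rightarrow> 'a::metric_space set) \<Rightarrow> ereal \<Rightarrow> bool" where
  "encodable \<Sigma> g \<longleftrightarrow> (if g = \<infinity> then (\<forall>g'>0. gamma_encodable \<Sigma> g')
                        else gamma_encodable \<Sigma> (real_of_ereal g))"

definition approx_class :: "real \<Rightarrow> (nat \<Rightarrow> 'a::metric_space set) \<Rightarrow> real \<Rightarrow> 'a set" where
  "approx_class \<alpha> \<Sigma> \<beta> = {f. \<forall>M\<ge>1. real M powr \<alpha> * infdist f (\<Sigma> M) \<le> \<beta>}"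

end

theory Submission
  imports Defs
begin

lemma infdist_approx:
  fixes S :: "'a::metric_space set"
  assumes "S \<noteq> {}" "d > 0"
  shows "\<exists>y\<in>S. dist f y < infdist f S + d"
proof -
  have bdd: "bdd_below ((\<lambda>a. dist f a) ` S)" by (rule bdd_belowI[of _ 0]) auto
  have e: "infdist f S = (INF a\<in>S. dist f a)" by (rule infdist_notempty[OF assms(1)])
  have "(INF a\<in>S. dist f a) < infdist f S + d" unfolding e[symmetric] using assms(2) by simp
  then show ?thesis by (simp add: cINF_less_iff[OF assms(1) bdd])
qed

lemma powr_calc:
  fixes K eps a g :: real
  assumes "K > 0" "eps > 0" "a > 0" "g > 0"
  shows "(2 * ((2*K/eps) powr (1/a))) powr (a/g) = 2 powr (a/g) * (2*K) powr (1/g) * eps powr (-1/g)"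
proof -
  have "(2 * ((2*K/eps) powr (1/a))) powr (a/g) = 2 powr (a/g) * ((2*K/eps) powr (1/a)) powr (a/g)"
    by (simp add: powr_mult)
  also have "((2*K/eps) powr (1/a)) powr (a/g) = (2*K/eps) powr (1/g)"
    using assms by (simp add: powr_powr)
  also have "(2*K/eps) powr (1/g) = (2*K) powr (1/g) * eps powr (-1/g)"
    using assms by (simp add: powr_divide powr_minus_divide divide_simps)
  finally show ?thesis by simp
qed

lemma key:
  fixes \<Sigma> :: "nat \<Rightarrow> 'a::metric_space set" and \<alpha> \<beta> a g \<gamma>1 :: real
  assumes ne: "\<And>M. M \<ge> 1 \<Longrightarrow> \<Sigma> M \<noteq> {}"
    and g: "0 < g" "g < a" and a: "a \<le> \<alpha>" "a \<le> \<gamma>1"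
    and enc: "has_encoding \<Sigma> \<gamma>1 (a/g - 1)"
    and \<beta>: "\<beta> > 0"
    and Ane: "approx_class \<alpha> \<Sigma> \<beta> \<noteq> {}"
  shows "entropy_bigO (approx_class \<alpha> \<Sigma> \<beta>) g"
proof -
  define A where "A = approx_class \<alpha> \<Sigma> \<beta>"
  define h where "h = a/g - 1"
  have apos: "a > 0" using g by simp
  have h1: "1 + h = a/g" by (simp add: h_def)
  obtain E :: "nat \<Rightarrow> 'a set" and c1 c2 where c1: "c1 > 0" and c2: "c2 > 0" and
    EM: "\<And>M. M \<ge> 1 \<Longrightarrow> is_covering (E M) (\<Sigma> M) (c1 * real M powr (- \<gamma>1)) \<and>
               log 2 (real (card (E M))) \<le> c2 * real M powr (1 + h)"
    using enc unfolding has_encoding_def h_def by blast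
  define K where "K = \<beta> + c1 + 1"
  have Kpos: "K > 0" using \<beta> c1 by (simp add: K_def)
  define C where "C = c2 * (2 powr (a/g) * (2*K) powr (1/g))"
  have P: "covering_number A eps \<noteq> \<infinity> \<and>
      \<bar>log 2 (real (the_enat (covering_number A eps)))\<bar> \<le> C * \<bar>eps powr (- 1 / g)\<bar>"
    if eps: "0 < eps" "eps < 2*K" for eps
  proof -
    define t where "t = (2*K/eps) powr (1/a)"
    have t1: "t \<ge> 1" unfolding t_def using eps apos Kpos
      by (simp add: ge_one_powr_ge_zero)
    define M where "M = nat \<lceil>t\<rceil>"
    have Mt: "real M \<ge> t" unfolding M_def by linarith
    have Mt2: "real M \<le> 2*t" unfolding M_def using t1 by linarith
    have M1: "M \<ge> 1" using Mt t1 by linarith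
    have Mpos: "real M > 0" using M1 by simp
    have tpow: "t powr (-a) = eps/(2*K)"
      unfolding t_def using eps apos Kpos by (simp add: powr_powr powr_minus_divide)
    have Ma: "real M powr (-a) \<le> eps/(2*K)"
      using powr_mono2'[of "-a" t "real M"] Mt t1 apos tpow by simp
    define r where "r = K * real M powr (-a)"
    have r2: "2*r \<le> eps" using Ma Kpos unfolding r_def by (simp add: field_simps)
    have ma: "real M powr (-\<alpha>) \<le> real M powr (-a)" using M1 a by (intro powr_mono) auto
    have mg: "real M powr (-\<gamma>1) \<le> real M powr (-a)" using M1 a by (intro powr_mono) auto
    have cov: "is_covering (E M) (\<Sigma> M) (c1 * real M powr (- \<gamma>1))"
      and lg: "log 2 (real (card (E M))) \<le> c2 * real M powr (1 + h)" using EM M1 by auto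
    have close: "\<exists>e\<in>E M. dist f e \<le> r" if f: "f \<in> A" for f
    proof -
      have "real M powr \<alpha> * infdist f (\<Sigma> M) \<le> \<beta>" using f M1 unfolding A_def approx_class_def by auto
      hence inf: "infdist f (\<Sigma> M) \<le> \<beta> * real M powr (-\<alpha>)"
        using Mpos by (simp add: powr_minus field_simps)
      obtain y where y: "y \<in> \<Sigma> M" "dist f y < infdist f (\<Sigma> M) + real M powr (-a)"
        using infdist_approx[OF ne[OF M1], of "real M powr (-a)" f] Mpos by auto
      obtain e where e: "e \<in> E M" "dist y e \<le> c1 * real M powr (- \<gamma>1)"
        using cov y(1) unfolding is_covering_def by auto
      have "dist f e \<le> dist f y + dist y e" by (rule dist_triangle)
      also have "\<dots> \<le> \<beta> * real M powr (-\<alpha>) + real M powr (-a) + c1 * real M powr (- \<gamma>1)"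
        using y e inf by linarith
      also have "\<dots> \<le> \<beta> * real M powr (-a) + real M powr (-a) + c1 * real M powr (-a)"
        using ma mg \<beta> c1 by (intro add_mono mult_left_mono) auto
      also have "\<dots> = r" by (simp add: r_def K_def algebra_simps)
      finally show ?thesis using e by auto
    qed
    define D where "D = {e\<in>E M. \<exists>f\<in>A. dist f e \<le> r}"
    define pick where "pick = (\<lambda>e. SOME f. f \<in> A \<and> dist f e \<le> r)"
    have pick: "pick e \<in> A \<and> dist (pick e) e \<le> r" if "e \<in> D" for e
      using that unfolding D_def pick_def by (metis (mono_tags, lifting) mem_Collect_eq someI_ex)
    define X where "X = pick ` D"
    have finE: "finite (E M)" using cov unfolding is_covering_def by auto
    have finD: "finite D" using finE unfolding D_def by auto
    have cardX: "card X \<le> card (E M)"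
      unfolding X_def using card_image_le[OF finD, of pick] card_mono[OF finE, of D]
      unfolding D_def by auto
    have Xcov: "is_covering X A eps"
      unfolding is_covering_def
    proof (intro conjI ballI)
      show "finite X" using finD unfolding X_def by auto
      show "X \<subseteq> A" using pick unfolding X_def by auto
      fix f assume f: "f \<in> A"
      then obtain e where e: "e \<in> E M" "dist f e \<le> r" using close by auto
      hence eD: "e \<in> D" using f unfolding D_def by auto
      have "dist f (pick e) \<le> dist f e + dist (pick e) e" by (rule dist_triangle2)
      also have "\<dots> \<le> eps" using e pick[OF eD] r2 by linarith
      finally show "\<exists>x\<in>X. dist f x \<le> eps" using eD unfolding X_def by auto
    qed
    have le: "covering_number A eps \<le> enat (card X)"
      unfolding covering_number_def using Xcov by (intro Inf_lower) auto
    have ge: "1 \<le> covering_number A eps"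
      unfolding covering_number_def
    proof (rule Inf_greatest)
      fix x assume "x \<in> {enat (card X) |X. is_covering X A eps}"
      then obtain Y where x: "x = enat (card Y)" and Y: "is_covering Y A eps" by auto
      obtain f0 where "f0 \<in> A" using Ane unfolding A_def by auto
      then obtain y where "y \<in> Y" using Y unfolding is_covering_def by auto
      hence "card Y \<ge> 1" using Y unfolding is_covering_def
        by (metis One_nat_def Suc_leI card_gt_0_iff empty_iff)
      thus "1 \<le> x" using x by (simp add: one_enat_def)
    qed
    have fin: "covering_number A eps \<noteq> \<infinity>"
    proof
      assume "covering_number A eps = \<infinity>"
      with le show False by simp
    qed
    then obtain n where n: "covering_number A eps = enat n" by auto
    have n1: "1 \<le> n" using ge n by (simp add: one_enat_def)
    have nX: "n \<le> card (E M)" using le n cardX by auto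
    have "\<bar>log 2 (real n)\<bar> = log 2 (real n)" using n1 by simp
    also have "\<dots> \<le> log 2 (real (card (E M)))" using n1 nX by simp
    also have "\<dots> \<le> c2 * real M powr (1 + h)" by (rule lg)
    also have "\<dots> \<le> c2 * (2*t) powr (a/g)" unfolding h1
      using Mt2 Mpos apos g c2 by (intro mult_left_mono powr_mono2) auto
    also have "\<dots> = C * \<bar>eps powr (- 1 / g)\<bar>"
      unfolding t_def C_def using powr_calc[OF Kpos eps(1) apos g(1)] by simp
    finally show ?thesis using fin n by simp
  qed
  have "\<forall>\<^sub>F eps in at_right 0. covering_number A eps \<noteq> \<infinity> \<and>
      \<bar>log 2 (real (the_enat (covering_number A eps)))\<bar> \<le> C * \<bar>eps powr (- 1 / g)\<bar>"
  proof -
    have H: "\<forall>y>0. y < 2*K \<longrightarrow> covering_number A y \<noteq> \<infinity> \<and>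
      \<bar>log 2 (real (the_enat (covering_number A y)))\<bar> \<le> C * \<bar>y powr (- 1 / g)\<bar>"
      using P by blast
    have K2: "(0::real) < 2*K" using Kpos by simp
    show ?thesis unfolding eventually_at_right_field by (rule exI[of _ "2*K"], rule conjI[OF K2 H])
  qed
  then show ?thesis unfolding entropy_bigO_def A_def[symmetric] by (rule exI)
qed

theorem mainTheorem9:
  fixes \<Sigma> :: "nat \<Rightarrow> 'a::metric_space set"
    and \<gamma> :: ereal and \<alpha> \<beta> :: real
  assumes "\<gamma> > 0"
    and "\<And>M. M \<ge> 1 \<Longrightarrow> \<Sigma> M \<noteq> {}"
    and "encodable \<Sigma> \<gamma>"
    and "\<alpha> > 0" and "\<beta> > 0"
    and "approx_class \<alpha> \<Sigma> \<beta> \<noteq> {}"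
  shows "opt_entropy_exp (approx_class \<alpha> \<Sigma> \<beta>) \<ge> min (ereal \<alpha>) \<gamma>"
proof -
  define A where "A = approx_class \<alpha> \<Sigma> \<beta>"
  define S where "S = {g::real. g > 0 \<and> entropy_bigO A g}"
  have inS: "g \<in> S" if g: "0 < g" "ereal g < min (ereal \<alpha>) \<gamma>" for g
  proof (cases "\<gamma> = \<infinity>")
    case True
    have ga: "g < \<alpha>" using g True by simp
    have "gamma_encodable \<Sigma> \<alpha>" using assms(3,4) True unfolding encodable_def by auto
    hence "has_encoding \<Sigma> \<alpha> (\<alpha>/g - 1)" unfolding gamma_encodable_def using g ga by simp
    note enc = this
    have aa: "\<alpha> \<le> \<alpha>" by simp
    have v1: "entropy_bigO A g" unfolding A_def
      by (rule key[OF assms(2) g(1) ga aa aa enc assms(5) assms(6)])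
    have "entropy_bigO A g" by (rule v1)
    thus ?thesis using g unfolding S_def by auto
  next
    case False
    then obtain r where r: "\<gamma> = ereal r" using assms(1) by (cases \<gamma>) auto
    have gr: "g < min \<alpha> r" using g r by simp
    have "gamma_encodable \<Sigma> r" using assms(3) r unfolding encodable_def by auto
    hence "has_encoding \<Sigma> r (min \<alpha> r/g - 1)" unfolding gamma_encodable_def using g gr by simp
    note enc = this
    have m1: "min \<alpha> r \<le> \<alpha>" by simp
    have m2: "min \<alpha> r \<le> r" by simp
    have "entropy_bigO A g" unfolding A_def
      by (rule key[OF assms(2) g(1) gr m1 m2 enc assms(5) assms(6)])
    thus ?thesis using g unfolding S_def by auto
  qed
  have mpos: "0 < min (ereal \<alpha>) \<gamma>" using assms by simp
  have Sne: "S \<noteq> {}"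
  proof -
    obtain w where w: "0 < w" "w < min (ereal \<alpha>) \<gamma>" using dense[OF mpos] by auto
    then obtain wr where "w = ereal wr" by (cases w) auto
    thus ?thesis using inS w by auto
  qed
  have le: "min (ereal \<alpha>) \<gamma> \<le> Sup (ereal ` S)"
  proof (rule dense_le_bounded[OF mpos])
    fix w assume w: "0 < w" "w < min (ereal \<alpha>) \<gamma>"
    then obtain wr where wr: "w = ereal wr" by (cases w) auto
    hence "wr \<in> S" using inS w by auto
    thus "w \<le> Sup (ereal ` S)" using wr by (simp add: Sup_upper)
  qed
  have eq: "opt_entropy_exp A = Sup (ereal ` S)"
    unfolding opt_entropy_exp_def S_def using Sne[unfolded S_def] by (rule if_not_P)
  show ?thesis unfolding A_def[symmetric] eq by (rule le)
qed

end
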